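(* Let $(X,d_X)$ be a geodesic metric space and $F\colon\mathbb{H}^n\to X$ satisfy hypotheses (1)–(4) with constants $\delta,\epsilon,R>0$: (1) each $F\circ\eta_x$ is a geodesic; (2) for distinct $x,x'$, $F\circ\eta_x$ and $F\circ\eta_{x'}$ are two sides of an ideal $\delta$-slim triangle in $X$; (3) $e^{-t}|x-x'|<\epsilon$ implies $d_X(F(x,t),F(x',t))\le R$; (4) $e^{-t_k}|x_k-x_k'|\to\infty$ implies $d_X(F(x_k,t_k),F(x_k',t_k))\to\infty$. Then there exists a constant $C_0=C_0(F)$ such that $t(r)-h_T\le C_0$ for every vertical triangle $T\subset\mathbb{H}^n$, where $r$ is the midpoint of the non-vertical side of $T$.
   Context: Exponential model $\mathbb{H}^n=\mathbb{R}^{n-1}\times\mathbb{R}$, coordinates $(x,t)$, metric $e^{-2t}|dx|^2+dt^2$; $\eta_x(t)=(x,t)$. An ideal $\delta$-slim triangle: three bi-infinite geodesics forming an ideal triangle, each side in the closed $\delta$-neighborhood of the union of the other two. A vertical triangle $T=\mathcal{P}\cup\mathcal{Q}\cup\mathcal{R}$ is an ideal triangle with vertical sides $\mathcal{P}=\eta_x(\mathbb{R})$, $\mathcal{Q}=\eta_{x'}(\mathbb{R})$, $x\ne x'$, and third side $\mathcal{R}$; its midpoint $r$ is the point of $\mathcal{R}$ of maximal $t$-coordinate $t(r)$. With $\Delta=\max\{3\delta,2R/\epsilon+R\}$, the displaced height is $h_T=\min\{t : d_X(F(x,t),F(\mathcal{Q}))\le\Delta\text{ or }d_X(F(\mathcal{P}),F(x',t))\le\Delta\}$,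 a finite number. *)

theory Defs
  imports "HOL-Analysis.Analysis"
begin

text \<open>Exponential model of hyperbolic space: points are pairs (x,t) with x in R^(n-1)
  (an arbitrary Euclidean space 'm) and t real; metric exp(-2t)|dx|^2 + dt^2.\<close>

definition eta :: "'m::euclidean_space \<Rightarrow> real \<Rightarrow> 'm \<times> real" where
  "eta x t = (x, t)"

definition bi_geodesic :: "(real \<Rightarrow> 'a::metric_space) \<Rightarrow> bool" where
  "bi_geodesic c \<longleftrightarrow> (\<forall>s t. dist (c s) (c t) = \<bar>s - t\<bar>)"

definition geodesic_space :: "'a::metric_space itself \<Rightarrow> bool" where
  "geodesic_space _ \<longleftrightarrow> (\<forall>p q :: 'a. \<exists>c :: real \<Rightarrow> 'a. c 0 = p \<and> c (dist p q) = q \<and>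
       (\<forall>s\<in>{0..dist p q}. \<forall>t\<in>{0..dist p q}. dist (c s) (c t) = \<bar>s - t\<bar>))"

definition asymptotic_rays :: "(real \<Rightarrow> 'a::metric_space) \<Rightarrow> (real \<Rightarrow> 'a) \<Rightarrow> bool" where
  "asymptotic_rays r1 r2 \<longleftrightarrow> (\<exists>C. \<forall>t\<ge>0. dist (r1 t) (r2 t) \<le> C)"

definition orientation_of :: "(real \<Rightarrow> 'a) \<Rightarrow> (real \<Rightarrow> 'a) \<Rightarrow> bool" where
  "orientation_of c c' \<longleftrightarrow> c' = c \<or> c' = (\<lambda>t. c (- t))"

definition ideal_triangle :: "(real \<Rightarrow> 'a::metric_space) \<Rightarrow> (real \<Rightarrow> 'a) \<Rightarrow> (real \<Rightarrow> 'a) \<Rightarrow> bool" where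
  "ideal_triangle a b c \<longleftrightarrow> bi_geodesic a \<and> bi_geodesic b \<and> bi_geodesic c \<and>
     (\<exists>a' b' c'. orientation_of a a' \<and> orientation_of b b' \<and> orientation_of c c' \<and>
        asymptotic_rays a' (\<lambda>t. b' (- t)) \<and>
        asymptotic_rays b' (\<lambda>t. c' (- t)) \<and>
        asymptotic_rays c' (\<lambda>t. a' (- t)))"

definition cnbhd :: "real \<Rightarrow> 'a::metric_space set \<Rightarrow> 'a set" where
  "cnbhd \<delta> S = {y. infdist y S \<le> \<delta>}"

definition ideal_slim_triangle :: "real \<Rightarrow> (real \<Rightarrow> 'a::metric_space) \<Rightarrow> (real \<Rightarrow> 'a) \<Rightarrow> (real \<Rightarrow> 'a) \<Rightarrow> bool" where
  "ideal_slim_triangle \<delta> a b c \<longleftrightarrow> ideal_triangle a b c \<and>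
     range a \<subseteq> cnbhd \<delta> (range b \<union> range c) \<and>
     range b \<subseteq> cnbhd \<delta> (range a \<union> range c) \<and>
     range c \<subseteq> cnbhd \<delta> (range a \<union> range b)"

text \<open>The non-vertical side of the vertical triangle with vertical sides over x and x':
  the hyperbolic geodesic joining the ideal points x and x', i.e. (in upper half-space
  coordinates y = exp t) the half circle over the segment [x,x'] centred at the midpoint.\<close>
definition third_side :: "'m::euclidean_space \<Rightarrow> 'm \<Rightarrow> ('m \<times> real) set" where
  "third_side x x' = {(z, t). \<exists>s\<in>{0<..<1}. z = (1 - s) *\<^sub>R x + s *\<^sub>R x' \<and>
       (norm (z - midpoint x x'))\<^sup>2 + (exp t)\<^sup>2 = (norm (x - x') / 2)\<^sup>2}"

text \<open>t(r): the maximal t-coordinate on the third side (height of its midpoint r).\<close>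
definition midpoint_height :: "'m::euclidean_space \<Rightarrow> 'm \<Rightarrow> real" where
  "midpoint_height x x' = Sup (snd ` third_side x x')"

definition displaced_height ::
  "('m::euclidean_space \<times> real \<Rightarrow> 'a::metric_space) \<Rightarrow> real \<Rightarrow> 'm \<Rightarrow> 'm \<Rightarrow> real" where
  "displaced_height F \<Delta> x x' =
     Inf {t. infdist (F (eta x t)) (F ` range (eta x')) \<le> \<Delta> \<or>
             infdist (F (eta x' t)) (F ` range (eta x)) \<le> \<Delta>}"

end

theory Submission
  imports Defs
begin

lemma key_close:
  fixes F :: "'m::euclidean_space \<times> real \<Rightarrow> 'a::metric_space"
  assumes H1: "\<And>x. bi_geodesic (F \<circ> eta x)"
    and H3: "\<And>x x' t. exp (- t) * norm (x - x') < \<epsilon> \<Longrightarrow>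
               dist (F (x, t)) (F (x', t)) \<le> R"
    and eps: "\<epsilon> > 0" and xx: "x \<noteq> x'"
    and inf: "infdist (F (eta x t)) (F ` range (eta x')) \<le> \<Delta>"
  shows "dist (F (x, t)) (F (x', t)) \<le> 2 * \<Delta> + 2 + R"
proof -
  have ga: "\<And>s u. dist (F (x, s)) (F (x, u)) = \<bar>s - u\<bar>"
    using H1[of x] by (simp add: bi_geodesic_def eta_def)
  have gb: "\<And>s u. dist (F (x', s)) (F (x', u)) = \<bar>s - u\<bar>"
    using H1[of x'] by (simp add: bi_geodesic_def eta_def)
  obtain s where s: "dist (F (x, t)) (F (x', s)) \<le> \<Delta> + 1"
  proof -
    have "\<exists>s. dist (F (x, t)) (F (x', s)) \<le> \<Delta> + 1"
    proof (rule ccontr)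
      assume "\<not> ?thesis"
      hence h: "\<And>s. \<Delta> + 1 \<le> dist (F (x, t)) (F (x', s))" using not_le less_imp_le by metis
      have "infdist (F (eta x t)) (F ` range (eta x')) = (INF a\<in>F ` range (eta x'). dist (F (eta x t)) a)"
        by (rule infdist_notempty) auto
      also have "\<dots> \<ge> \<Delta> + 1"
        by (rule cINF_greatest) (auto simp: eta_def h)
      finally show False using inf by linarith
    qed
    thus ?thesis using that by blast
  qed
  define D where "D = norm (x - x')"
  have Dpos: "D > 0" using xx by (simp add: D_def)
  define u0 where "u0 = ln (D / \<epsilon>) + 1"
  have close: "dist (F (x, u)) (F (x', u)) \<le> R" if "u \<ge> u0" for u
  proof (rule H3)
    have "exp (- u) * D \<le> exp (- u0) * D" using that Dpos by simp
    also have "exp (- u0) = exp (- 1) * (\<epsilon> / D)"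
      using Dpos eps by (simp add: u0_def exp_diff exp_minus field_simps)
    also have "exp (- 1) * (\<epsilon> / D) * D = exp (-1) * \<epsilon>" using Dpos by simp
    also have "\<dots> < \<epsilon>" using eps by simp
    finally show "exp (- u) * norm (x - x') < \<epsilon>" by (simp add: D_def)
  qed
  have st: "\<bar>s - t\<bar> \<le> \<Delta> + 1 + R"
  proof (cases "s \<ge> u0")
    case True
    have "dist (F (x, s)) (F (x, t)) \<le> dist (F (x, s)) (F (x', s)) + dist (F (x', s)) (F (x, t))"
      by (rule dist_triangle)
    thus ?thesis using close[OF True] s ga[of s t] by (simp add: dist_commute)
  next
    case F1: False
    show ?thesis
    proof (cases "t \<ge> u0")
      case True
      have "dist (F (x', s)) (F (x', t)) \<le> dist (F (x', s)) (F (x, t)) + dist (F (x, t)) (F (x', t))"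
        by (rule dist_triangle)
      thus ?thesis using close[OF True] s gb[of s t] by (simp add: dist_commute)
    next
      case False
      have c0: "dist (F (x, u0)) (F (x', u0)) \<le> R" using close by simp
      have "dist (F (x, t)) (F (x, u0)) \<le> dist (F (x, t)) (F (x', s)) + dist (F (x', s)) (F (x', u0)) + dist (F (x', u0)) (F (x, u0))"
        using dist_triangle[of "F (x, t)" "F (x, u0)" "F (x', s)"] dist_triangle[of "F (x', s)" "F (x, u0)" "F (x', u0)"] by linarith
      moreover have "dist (F (x', s)) (F (x', u0)) \<le> dist (F (x', s)) (F (x, t)) + dist (F (x, t)) (F (x, u0)) + dist (F (x, u0)) (F (x', u0))"
        using dist_triangle[of "F (x', s)" "F (x', u0)" "F (x, t)"] dist_triangle[of "F (x, t)" "F (x', u0)" "F (x, u0)"] by linarith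
      ultimately show ?thesis using c0 s ga[of t u0] gb[of s u0] F1 False
        by (simp add: dist_commute)
    qed
  qed
  have "dist (F (x, t)) (F (x', t)) \<le> dist (F (x, t)) (F (x', s)) + dist (F (x', s)) (F (x', t))"
    by (rule dist_triangle)
  thus ?thesis using s st gb[of s t] by simp
qed

lemma bound_B:
  fixes F :: "'m::euclidean_space \<times> real \<Rightarrow> 'a::metric_space"
  assumes H4: "\<And>xs xs' ts. filterlim (\<lambda>k::nat. exp (- ts k) * norm (xs k - xs' k)) at_top sequentially \<Longrightarrow>
               filterlim (\<lambda>k. dist (F (xs k, ts k)) (F (xs' k, ts k))) at_top sequentially"
  shows "\<exists>B. \<forall>x x' t. dist (F (x, t)) (F (x', t)) \<le> M \<longrightarrow> exp (- t) * norm (x - x') \<le> B"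
proof (rule ccontr)
  assume "\<not> ?thesis"
  hence "\<forall>k::nat. \<exists>p. dist (F (fst p, snd (snd p))) (F (fst (snd p), snd (snd p))) \<le> M \<and>
      exp (- snd (snd p)) * norm (fst p - fst (snd p)) > real k"
    by (metis fst_conv snd_conv not_le)
  then obtain p where p: "\<And>k. dist (F (fst (p k), snd (snd (p k)))) (F (fst (snd (p k)), snd (snd (p k)))) \<le> M \<and>
      exp (- snd (snd (p k))) * norm (fst (p k) - fst (snd (p k))) > real k"
    by metis
  have "filterlim (\<lambda>k::nat. exp (- snd (snd (p k))) * norm (fst (p k) - fst (snd (p k)))) at_top sequentially"
    by (rule filterlim_at_top_mono[OF filterlim_real_sequentially]) (use p in \<open>auto intro!: always_eventually less_imp_le\<close>)
  from H4[OF this] have "eventually (\<lambda>k. dist (F (fst (p k), snd (snd (p k)))) (F (fst (snd (p k)), snd (snd (p k))))  \<ge> M + 1) sequentially"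
    by (simp add: filterlim_at_top)
  then obtain N where "\<And>k. k \<ge> N \<Longrightarrow> dist (F (fst (p k), snd (snd (p k)))) (F (fst (snd (p k)), snd (snd (p k))))  \<ge> M + 1"
    by (auto simp: eventually_sequentially)
  from this[of N] p[of N] show False by linarith
qed

theorem claim2p4:
  fixes F :: "'m::euclidean_space \<times> real \<Rightarrow> 'a::metric_space"
    and \<delta> \<epsilon> R :: real
  assumes geod_space: "geodesic_space TYPE('a)"
    and pos: "\<delta> > 0" "\<epsilon> > 0" "R > 0"
    and H1: "\<And>x. bi_geodesic (F \<circ> eta x)"
    and H2: "\<And>x x'. x \<noteq> x' \<Longrightarrow>
               \<exists>c. ideal_slim_triangle \<delta> (F \<circ> eta x) (F \<circ> eta x') c"
    and H3: "\<And>x x' t. exp (- t) * norm (x - x') < \<epsilon> \<Longrightarrow>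
               dist (F (x, t)) (F (x', t)) \<le> R"
    and H4: "\<And>xs xs' ts. filterlim (\<lambda>k::nat. exp (- ts k) * norm (xs k - xs' k)) at_top sequentially \<Longrightarrow>
               filterlim (\<lambda>k. dist (F (xs k, ts k)) (F (xs' k, ts k))) at_top sequentially"
  shows "\<exists>C0. \<forall>x x'. x \<noteq> x' \<longrightarrow>
           midpoint_height x x' - displaced_height F (max (3 * \<delta>) (2 * R / \<epsilon> + R)) x x' \<le> C0"
proof -
  define \<Delta> where "\<Delta> = max (3 * \<delta>) (2 * R / \<epsilon> + R)"
  obtain B where B: "\<And>x x' t. dist (F (x, t)) (F (x', t)) \<le> 2 * \<Delta> + 2 + R \<Longrightarrow> exp (- t) * norm (x - x') \<le> B"
    using bound_B[where F=F and M="2 * \<Delta> + 2 + R", OF H4] by blast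
  show ?thesis
  proof (intro exI allI impI)
    fix x x' :: 'm
    assume xx: "x \<noteq> x'"
    define D where "D = norm (x - x')"
    have Dpos: "D > 0" using xx by (simp add: D_def)
    define S where "S = {t. infdist (F (eta x t)) (F ` range (eta x')) \<le> \<Delta> \<or>
             infdist (F (eta x' t)) (F ` range (eta x)) \<le> \<Delta>}"
    have Sne: "S \<noteq> {}"
    proof -
      define u where "u = ln (D / \<epsilon>) + 1"
      have "exp (- u) = exp (- 1) * (\<epsilon> / D)"
        using Dpos pos by (simp add: u_def exp_diff exp_minus field_simps)
      hence "exp (- u) * D = exp (-1) * \<epsilon>" using Dpos by simp
      also have "\<dots> < \<epsilon>" using pos by simp
      finally have "dist (F (x, u)) (F (x', u)) \<le> R" using H3 by (simp add: D_def)
      hence "infdist (F (eta x u)) (F ` range (eta x')) \<le> \<Delta>"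
      proof (intro infdist_le2[where a = "F (x', u)"])
        have "0 \<le> 2 * R / \<epsilon>" using pos by simp
        hence "R \<le> \<Delta>" unfolding \<Delta>_def by linarith
        thus "dist (F (eta x u)) (F (x', u)) \<le> \<Delta>" using \<open>dist (F (x, u)) (F (x', u)) \<le> R\<close> by (simp add: eta_def)
      qed (auto simp: eta_def)
      thus ?thesis unfolding S_def by blast
    qed
    have Bpos: "B > 0"
    proof -
      obtain t where "t \<in> S" using Sne by blast
      hence "dist (F (x, t)) (F (x', t)) \<le> 2 * \<Delta> + 2 + R \<or> dist (F (x', t)) (F (x, t)) \<le> 2 * \<Delta> + 2 + R"
        unfolding S_def using key_close[OF H1 H3 pos(2) xx] key_close[OF H1 H3 pos(2) xx[symmetric]] by blast
      hence "exp (- t) * D \<le> B" using B[of x t x'] B[of x' t x] by (auto simp: D_def norm_minus_commute)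
      moreover have "exp (- t) * D > 0" using Dpos by (intro mult_pos_pos) auto
      ultimately show ?thesis by linarith
    qed
    have lowS: "ln D - ln B \<le> displaced_height F \<Delta> x x'"
      unfolding displaced_height_def S_def[symmetric]
    proof (rule cInf_greatest[OF Sne])
      fix t assume "t \<in> S"
      hence "dist (F (x, t)) (F (x', t)) \<le> 2 * \<Delta> + 2 + R \<or> dist (F (x', t)) (F (x, t)) \<le> 2 * \<Delta> + 2 + R"
        unfolding S_def using key_close[OF H1 H3 pos(2) xx] key_close[OF H1 H3 pos(2) xx[symmetric]] by blast
      hence e: "exp (- t) * D \<le> B" using B[of x t x'] B[of x' t x] by (auto simp: D_def norm_minus_commute)
      have "ln (exp (- t) * D) \<le> ln B" using e Dpos Bpos by (subst ln_le_cancel_iff) auto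
      thus "ln D - ln B \<le> t" using Dpos by (simp add: ln_mult)
    qed
    have midS: "midpoint_height x x' \<le> ln (D / 2)"
      unfolding midpoint_height_def
    proof (rule cSup_least)
      show "snd ` third_side x x' \<noteq> {}"
      proof -
        have "(midpoint x x', ln (D / 2)) \<in> third_side x x'"
          unfolding third_side_def
          using Dpos apply (simp add: D_def)
          apply (rule bexI[where x="1/2"])
          by (auto simp: midpoint_def scaleR_add_right)
        thus ?thesis by blast
      qed
    next
      fix t assume "t \<in> snd ` third_side x x'"
      then obtain z where "(z, t) \<in> third_side x x'" by force
      then obtain w where "w\<^sup>2 + (exp t)\<^sup>2 = (D / 2)\<^sup>2" unfolding third_side_def D_def by auto
      moreover have "0 \<le> w\<^sup>2" by simp
      ultimately have "(exp t)\<^sup>2 \<le> (D / 2)\<^sup>2" by linarith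
      hence "exp t \<le> D / 2" using Dpos by (simp add: power_mono_iff abs_le_square_iff)
      thus "t \<le> ln (D / 2)" using Dpos by (simp add: ln_ge_iff)
    qed
    have "ln (D / 2) = ln D - ln 2" using Dpos by (simp add: ln_div)
    show "midpoint_height x x' - displaced_height F (max (3 * \<delta>) (2 * R / \<epsilon> + R)) x x' \<le> ln B - ln 2"
      using lowS midS \<open>ln (D / 2) = ln D - ln 2\<close> unfolding \<Delta>_def by linarith
  qed
qed

end
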